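(* Let $\pi:P\to M$ be a principal fibre bundle with group $G=P^{-1}P$, in the setting described in the context, and let $\nabla$ be a connection in the groupoid $PP^{-1}$ with connection form $\omega$. Let $R=R_\nabla$ be its curvature and $\hat R$ the $G$-valued 2-form on $P$ corresponding to $R$. Then $\hat R=d\omega$ as $G$-valued 2-forms on $P$, i.e. for every infinitesimal 2-simplex $(x,y,z)$ in $P$, $$R(\pi x,\pi y,\pi z)\cdot x = x\cdot\omega(x,y)\omega(y,z)\omega(z,x).$$ In particular, $d\omega$ is horizontal and equivariant.
   Context: Setting: $\Phi$ is a groupoid whose object set contains a set $M$ and an object $*\notin M$; $P$ is the set of arrows of $\Phi$ with domain $*$ and codomain in $M$; $\pi:P\to M$ the codomain map; $G=P^{-1}P:=\Phi( *,* )$ acts on $P$ from the right by precomposition, freely and transitively on fibres; $x^{-1}z\in G$ for $x,z$ in one fibre is computed in $\Phi$. $PP^{-1}$ is the full subgroupoid of $\Phi$ on $M$, acting on $P$ from the left by postcomposition; composition is right to left. $M$ and $P$ carry reflexive symmetric neighbour relations $\sim$; an infinitesimal $k$-simplex is a $(k+1)$-tuple of mutual neighbours; $\pi$ preserves $\sim$; every infinitesimal $k$-simplex in $M$ lifts to one in $P$ starting at any prescribed point over its first vertex; the right action of each $g\in G$ preserves $\sim$. A connection in $PP^{-1}$ assigns to each $a\sim b$ in $M$ an arrow $\nabla(a,b):b\to a$ of $PP^{-1}$, with $\nabla(a,a)=\mathrm{id}$, $\nabla(b,a)=\nabla(a,b)^{-1}$. Its connection form is $\omega(u,v):=u^{-1}(\nabla(\pi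 u,\pi v)\cdot v)\in G$ for $u\sim v$. Its curvature is the 2-form $R(a_0,a_1,a_2)=\nabla(a_0,a_1)\nabla(a_1,a_2)\nabla(a_2,a_0)\in PP^{-1}(a_0,a_0)$ on infinitesimal 2-simplices of $M$ (a 2-form with values in the gauge group bundle, whose fibre over $a$ is $PP^{-1}(a,a)$). For a gauge-valued 2-form $\alpha$ on $M$, $\hat\alpha$ is the $G$-valued 2-form on $P$ with $\hat\alpha(u_0,u_1,u_2)=u_0^{-1}(\alpha(\pi u_0,\pi u_1,\pi u_2)\cdot u_0)$. For a $G$-valued 1-form $\omega$, $d\omega(x_0,x_1,x_2)=\omega(x_0,x_1)\omega(x_1,x_2)\omega(x_2,x_0)$. A $G$-valued $k$-form $\theta$ on $P$ is horizontal if $\theta(u_0,u_1,\dots,u_k)=\theta(u_0,u_1g_1,\dots,u_kg_k)$ whenever $(u_0,u_1g_1,\dots,u_kg_k)$ is still an infinitesimal simplex, and equivariant if $\theta(u_0g,\dots,u_kg)=g^{-1}\theta(u_0,\dots,u_k)g$ for all $g\in G$. *)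

theory Defs
  imports Main
begin

text \<open>A groupoid is given by an object set Ob, an arrow set Ar, domain and codomain maps,
  composition (cmp g f = g after f, defined when dm g = cd f; composition is right to left),
  inverse and identities.\<close>

definition groupoid ::
  "'o set \<Rightarrow> 'a set \<Rightarrow> ('a \<Rightarrow> 'o) \<Rightarrow> ('a \<Rightarrow> 'o) \<Rightarrow> ('a \<Rightarrow> 'a \<Rightarrow> 'a) \<Rightarrow> ('a \<Rightarrow> 'a) \<Rightarrow> ('o \<Rightarrow> 'a) \<Rightarrow> bool"
  where
  "groupoid Ob Ar dm cd cmp iv idt \<longleftrightarrow>
    (\<forall>f\<in>Ar. dm f \<in> Ob \<and> cd f \<in> Ob) \<and>
    (\<forall>a\<in>Ob. idt a \<in> Ar \<and> dm (idt a) = a \<and> cd (idt a) = a) \<and>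
    (\<forall>f\<in>Ar. \<forall>g\<in>Ar. dm g = cd f \<longrightarrow>
        cmp g f \<in> Ar \<and> dm (cmp g f) = dm f \<and> cd (cmp g f) = cd g) \<and>
    (\<forall>f\<in>Ar. \<forall>g\<in>Ar. \<forall>h\<in>Ar. dm h = cd g \<and> dm g = cd f \<longrightarrow>
        cmp h (cmp g f) = cmp (cmp h g) f) \<and>
    (\<forall>f\<in>Ar. cmp (idt (cd f)) f = f \<and> cmp f (idt (dm f)) = f) \<and>
    (\<forall>f\<in>Ar. iv f \<in> Ar \<and> dm (iv f) = cd f \<and> cd (iv f) = dm f \<and>
        cmp (iv f) f = idt (dm f) \<and> cmp f (iv f) = idt (cd f))"

definition bundleP :: "'a set \<Rightarrow> ('a \<Rightarrow> 'o) \<Rightarrow> ('a \<Rightarrow> 'o) \<Rightarrow> 'o \<Rightarrow> 'o set \<Rightarrow> 'a set" where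
  "bundleP Ar dm cd st M = {f\<in>Ar. dm f = st \<and> cd f \<in> M}"

definition groupG :: "'a set \<Rightarrow> ('a \<Rightarrow> 'o) \<Rightarrow> ('a \<Rightarrow> 'o) \<Rightarrow> 'o \<Rightarrow> 'a set" where
  "groupG Ar dm cd st = {f\<in>Ar. dm f = st \<and> cd f = st}"

definition inf_simplex :: "('b \<Rightarrow> 'b \<Rightarrow> bool) \<Rightarrow> 'b list \<Rightarrow> bool" where
  "inf_simplex nb xs \<longleftrightarrow> (\<forall>x\<in>set xs. \<forall>y\<in>set xs. nb x y)"

definition bundle_setting ::
  "'o set \<Rightarrow> 'a set \<Rightarrow> ('a \<Rightarrow> 'o) \<Rightarrow> ('a \<Rightarrow> 'o) \<Rightarrow> ('a \<Rightarrow> 'a \<Rightarrow> 'a) \<Rightarrow> ('a \<Rightarrow> 'a) \<Rightarrow> ('o \<Rightarrow> 'a)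
   \<Rightarrow> 'o \<Rightarrow> 'o set \<Rightarrow> ('o \<Rightarrow> 'o \<Rightarrow> bool) \<Rightarrow> ('a \<Rightarrow> 'a \<Rightarrow> bool) \<Rightarrow> bool" where
  "bundle_setting Ob Ar dm cd cmp iv idt st M nbM nbP \<longleftrightarrow>
    groupoid Ob Ar dm cd cmp iv idt \<and> M \<subseteq> Ob \<and> st \<in> Ob \<and> st \<notin> M \<and>
    (\<forall>a\<in>M. nbM a a) \<and> (\<forall>a\<in>M. \<forall>b\<in>M. nbM a b \<longrightarrow> nbM b a) \<and>
    (\<forall>u\<in>bundleP Ar dm cd st M. nbP u u) \<and>
    (\<forall>u\<in>bundleP Ar dm cd st M. \<forall>v\<in>bundleP Ar dm cd st M. nbP u v \<longrightarrow> nbP v u) \<and>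
    (\<forall>u\<in>bundleP Ar dm cd st M. \<forall>v\<in>bundleP Ar dm cd st M. nbP u v \<longrightarrow> nbM (cd u) (cd v)) \<and>
    (\<forall>as u. as \<noteq> [] \<and> set as \<subseteq> M \<and> inf_simplex nbM as \<and>
        u \<in> bundleP Ar dm cd st M \<and> cd u = hd as \<longrightarrow>
       (\<exists>us. length us = length as \<and> set us \<subseteq> bundleP Ar dm cd st M \<and>
            inf_simplex nbP us \<and> hd us = u \<and> map cd us = as)) \<and>
    (\<forall>g\<in>groupG Ar dm cd st. \<forall>u\<in>bundleP Ar dm cd st M. \<forall>v\<in>bundleP Ar dm cd st M.
        nbP u v \<longrightarrow> nbP (cmp u g) (cmp v g))"

definition connection ::
  "'a set \<Rightarrow> ('a \<Rightarrow> 'o) \<Rightarrow> ('a \<Rightarrow> 'o) \<Rightarrow> ('a \<Rightarrow> 'a) \<Rightarrow> ('o \<Rightarrow> 'a)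
   \<Rightarrow> 'o set \<Rightarrow> ('o \<Rightarrow> 'o \<Rightarrow> bool) \<Rightarrow> ('o \<Rightarrow> 'o \<Rightarrow> 'a) \<Rightarrow> bool" where
  "connection Ar dm cd iv idt M nbM nabla \<longleftrightarrow>
    (\<forall>a\<in>M. \<forall>b\<in>M. nbM a b \<longrightarrow>
       nabla a b \<in> Ar \<and> dm (nabla a b) = b \<and> cd (nabla a b) = a \<and>
       nabla b a = iv (nabla a b)) \<and>
    (\<forall>a\<in>M. nabla a a = idt a)"

definition conn_form ::
  "('a \<Rightarrow> 'o) \<Rightarrow> ('a \<Rightarrow> 'a \<Rightarrow> 'a) \<Rightarrow> ('a \<Rightarrow> 'a) \<Rightarrow> ('o \<Rightarrow> 'o \<Rightarrow> 'a) \<Rightarrow> 'a \<Rightarrow> 'a \<Rightarrow> 'a" where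
  "conn_form cd cmp iv nabla u v = cmp (iv u) (cmp (nabla (cd u) (cd v)) v)"

definition curvature :: "('a \<Rightarrow> 'a \<Rightarrow> 'a) \<Rightarrow> ('o \<Rightarrow> 'o \<Rightarrow> 'a) \<Rightarrow> 'o \<Rightarrow> 'o \<Rightarrow> 'o \<Rightarrow> 'a" where
  "curvature cmp nabla a0 a1 a2 = cmp (nabla a0 a1) (cmp (nabla a1 a2) (nabla a2 a0))"

definition hat_form ::
  "('a \<Rightarrow> 'o) \<Rightarrow> ('a \<Rightarrow> 'a \<Rightarrow> 'a) \<Rightarrow> ('a \<Rightarrow> 'a) \<Rightarrow> ('o \<Rightarrow> 'o \<Rightarrow> 'o \<Rightarrow> 'a) \<Rightarrow> 'a \<Rightarrow> 'a \<Rightarrow> 'a \<Rightarrow> 'a" where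
  "hat_form cd cmp iv \<alpha> u0 u1 u2 = cmp (iv u0) (cmp (\<alpha> (cd u0) (cd u1) (cd u2)) u0)"

definition d_form :: "('a \<Rightarrow> 'a \<Rightarrow> 'a) \<Rightarrow> ('a \<Rightarrow> 'a \<Rightarrow> 'a) \<Rightarrow> 'a \<Rightarrow> 'a \<Rightarrow> 'a \<Rightarrow> 'a" where
  "d_form cmp \<omega> x0 x1 x2 = cmp (\<omega> x0 x1) (cmp (\<omega> x1 x2) (\<omega> x2 x0))"

definition horizontal2 ::
  "'a set \<Rightarrow> 'a set \<Rightarrow> ('a \<Rightarrow> 'a \<Rightarrow> 'a) \<Rightarrow> ('a \<Rightarrow> 'a \<Rightarrow> bool) \<Rightarrow> ('a \<Rightarrow> 'a \<Rightarrow> 'a \<Rightarrow> 'a) \<Rightarrow> bool" where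
  "horizontal2 P G cmp nbP \<theta> \<longleftrightarrow>
    (\<forall>u0\<in>P. \<forall>u1\<in>P. \<forall>u2\<in>P. \<forall>g1\<in>G. \<forall>g2\<in>G.
       inf_simplex nbP [u0, u1, u2] \<and> inf_simplex nbP [u0, cmp u1 g1, cmp u2 g2] \<longrightarrow>
       \<theta> u0 u1 u2 = \<theta> u0 (cmp u1 g1) (cmp u2 g2))"

definition equivariant2 ::
  "'a set \<Rightarrow> 'a set \<Rightarrow> ('a \<Rightarrow> 'a \<Rightarrow> 'a) \<Rightarrow> ('a \<Rightarrow> 'a) \<Rightarrow> ('a \<Rightarrow> 'a \<Rightarrow> bool) \<Rightarrow> ('a \<Rightarrow> 'a \<Rightarrow> 'a \<Rightarrow> 'a) \<Rightarrow> bool" where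
  "equivariant2 P G cmp iv nbP \<theta> \<longleftrightarrow>
    (\<forall>u0\<in>P. \<forall>u1\<in>P. \<forall>u2\<in>P. \<forall>g\<in>G.
       inf_simplex nbP [u0, u1, u2] \<longrightarrow>
       \<theta> (cmp u0 g) (cmp u1 g) (cmp u2 g) = cmp (iv g) (cmp (\<theta> u0 u1 u2) g))"

end

theory Submission
  imports Defs
begin

locale grpd =
  fixes Ob :: "'o set" and Ar :: "'a set" and dm cd :: "'a \<Rightarrow> 'o"
    and cmp :: "'a \<Rightarrow> 'a \<Rightarrow> 'a" and iv :: "'a \<Rightarrow> 'a" and idt :: "'o \<Rightarrow> 'a"
  assumes G: "groupoid Ob Ar dm cd cmp iv idt"
begin

lemma cmp_in[simp]: "f \<in> Ar \<Longrightarrow> g \<in> Ar \<Longrightarrow> dm g = cd f \<Longrightarrow> cmp g f \<in> Ar"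
  and dm_cmp[simp]: "f \<in> Ar \<Longrightarrow> g \<in> Ar \<Longrightarrow> dm g = cd f \<Longrightarrow> dm (cmp g f) = dm f"
  and cd_cmp[simp]: "f \<in> Ar \<Longrightarrow> g \<in> Ar \<Longrightarrow> dm g = cd f \<Longrightarrow> cd (cmp g f) = cd g"
  using G unfolding groupoid_def by blast+

lemma assoc[simp]: "f \<in> Ar \<Longrightarrow> g \<in> Ar \<Longrightarrow> h \<in> Ar \<Longrightarrow> dm h = cd g \<Longrightarrow> dm g = cd f \<Longrightarrow>
   cmp h (cmp g f) = cmp (cmp h g) f"
  using G unfolding groupoid_def by blast

lemma iv_in[simp]: "f \<in> Ar \<Longrightarrow> iv f \<in> Ar"
  and dm_iv[simp]: "f \<in> Ar \<Longrightarrow> dm (iv f) = cd f"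
  and cd_iv[simp]: "f \<in> Ar \<Longrightarrow> cd (iv f) = dm f"
  and iv_l[simp]: "f \<in> Ar \<Longrightarrow> cmp (iv f) f = idt (dm f)"
  and iv_r[simp]: "f \<in> Ar \<Longrightarrow> cmp f (iv f) = idt (cd f)"
  and id_l[simp]: "f \<in> Ar \<Longrightarrow> cmp (idt (cd f)) f = f"
  and id_r[simp]: "f \<in> Ar \<Longrightarrow> cmp f (idt (dm f)) = f"
  using G unfolding groupoid_def by blast+

lemma id_l'[simp]: "f \<in> Ar \<Longrightarrow> a = cd f \<Longrightarrow> cmp (idt a) f = f" by simp
lemma id_r'[simp]: "f \<in> Ar \<Longrightarrow> a = dm f \<Longrightarrow> cmp f (idt a) = f" by simp

lemma canc1[simp]: "f \<in> Ar \<Longrightarrow> g \<in> Ar \<Longrightarrow> dm f = cd g \<Longrightarrow> cmp (cmp f g) (iv g) = f"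
  by (metis assoc iv_in cd_iv iv_r id_r dm_iv)
lemma canc2[simp]: "f \<in> Ar \<Longrightarrow> g \<in> Ar \<Longrightarrow> dm f = dm g \<Longrightarrow> cmp (cmp f (iv g)) g = f"
  by (metis assoc iv_in cd_iv iv_l id_r dm_iv)

lemma iv_cmp: "f \<in> Ar \<Longrightarrow> g \<in> Ar \<Longrightarrow> dm g = cd f \<Longrightarrow> iv (cmp g f) = cmp (iv f) (iv g)"
proof -
  assume a: "f \<in> Ar" "g \<in> Ar" "dm g = cd f"
  define h where "h = cmp g f"
  define k where "k = cmp (iv f) (iv g)"
  have h: "h \<in> Ar" "dm h = dm f" "cd h = cd g" using a by (simp_all add: h_def)
  have k: "k \<in> Ar" "dm k = cd g" using a by (simp_all add: k_def)
  have kh: "cmp k h = idt (dm h)" using a unfolding h_def k_def by simp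
  have "iv h = cmp (idt (dm h)) (iv h)" using h by simp
  also have "\<dots> = cmp (cmp k h) (iv h)" using kh by simp
  also have "\<dots> = k" using h k by simp
  finally show ?thesis unfolding h_def k_def .
qed

end

lemma key:
  assumes S: "bundle_setting Ob Ar dm cd cmp iv idt st M nbM nbP"
    and C: "connection Ar dm cd iv idt M nbM nabla"
    and x: "x \<in> bundleP Ar dm cd st M" and y: "y \<in> bundleP Ar dm cd st M"
    and z: "z \<in> bundleP Ar dm cd st M"
    and n: "nbM (cd x) (cd y)" "nbM (cd y) (cd z)" "nbM (cd z) (cd x)"
  shows "d_form cmp (conn_form cd cmp iv nabla) x y z
     = cmp (iv x) (cmp (curvature cmp nabla (cd x) (cd y) (cd z)) x)"
proof -
  interpret grpd Ob Ar dm cd cmp iv idt using S unfolding bundle_setting_def grpd_def by (elim conjE) assumption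
  from x y z have xs: "x \<in> Ar" "dm x = st" "cd x \<in> M" "y \<in> Ar" "dm y = st" "cd y \<in> M"
    "z \<in> Ar" "dm z = st" "cd z \<in> M" unfolding bundleP_def by auto
  from C n xs have N: "nabla (cd x) (cd y) \<in> Ar" "dm (nabla (cd x) (cd y)) = cd y" "cd (nabla (cd x) (cd y)) = cd x"
     "nabla (cd y) (cd z) \<in> Ar" "dm (nabla (cd y) (cd z)) = cd z" "cd (nabla (cd y) (cd z)) = cd y"
     "nabla (cd z) (cd x) \<in> Ar" "dm (nabla (cd z) (cd x)) = cd x" "cd (nabla (cd z) (cd x)) = cd z"
    unfolding connection_def by auto
  show ?thesis unfolding d_form_def conn_form_def curvature_def using xs N by simp
qed

lemma Rtyp:
  assumes S: "bundle_setting Ob Ar dm cd cmp iv idt st M nbM nbP"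
    and C: "connection Ar dm cd iv idt M nbM nabla"
    and "a \<in> M" "b \<in> M" "c \<in> M" "nbM a b" "nbM b c" "nbM c a"
  shows "curvature cmp nabla a b c \<in> Ar \<and> dm (curvature cmp nabla a b c) = a
     \<and> cd (curvature cmp nabla a b c) = a"
proof -
  interpret grpd Ob Ar dm cd cmp iv idt using S unfolding bundle_setting_def grpd_def by (elim conjE) assumption
  show ?thesis using assms(3-) C unfolding connection_def curvature_def by simp
qed

theorem theorem1:
  fixes Ob :: "'o set" and Ar :: "'a set" and dm cd :: "'a \<Rightarrow> 'o"
    and cmp :: "'a \<Rightarrow> 'a \<Rightarrow> 'a" and iv :: "'a \<Rightarrow> 'a" and idt :: "'o \<Rightarrow> 'a"
    and st :: 'o and M :: "'o set"
    and nbM :: "'o \<Rightarrow> 'o \<Rightarrow> bool" and nbP :: "'a \<Rightarrow> 'a \<Rightarrow> bool"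
    and nabla :: "'o \<Rightarrow> 'o \<Rightarrow> 'a"
  assumes "bundle_setting Ob Ar dm cd cmp iv idt st M nbM nbP"
    and "connection Ar dm cd iv idt M nbM nabla"
  shows "(\<forall>x\<in>bundleP Ar dm cd st M. \<forall>y\<in>bundleP Ar dm cd st M. \<forall>z\<in>bundleP Ar dm cd st M.
            inf_simplex nbP [x, y, z] \<longrightarrow>
              hat_form cd cmp iv (curvature cmp nabla) x y z
                = d_form cmp (conn_form cd cmp iv nabla) x y z
            \<and> cmp (curvature cmp nabla (cd x) (cd y) (cd z)) x
                = cmp x (cmp (conn_form cd cmp iv nabla x y)
                          (cmp (conn_form cd cmp iv nabla y z) (conn_form cd cmp iv nabla z x))))
       \<and> horizontal2 (bundleP Ar dm cd st M) (groupG Ar dm cd st) cmp nbP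
           (d_form cmp (conn_form cd cmp iv nabla))
       \<and> equivariant2 (bundleP Ar dm cd st M) (groupG Ar dm cd st) cmp iv nbP
           (d_form cmp (conn_form cd cmp iv nabla))"
proof -
  note S = assms(1) and C = assms(2)
  interpret grpd Ob Ar dm cd cmp iv idt using S unfolding bundle_setting_def grpd_def by (elim conjE) assumption
  let ?P = "bundleP Ar dm cd st M" and ?G = "groupG Ar dm cd st"
  let ?R = "curvature cmp nabla" and ?d = "d_form cmp (conn_form cd cmp iv nabla)"
  have Pm: "u \<in> ?P \<Longrightarrow> u \<in> Ar \<and> dm u = st \<and> cd u \<in> M" for u
    unfolding bundleP_def by auto
  have Gm: "g \<in> ?G \<Longrightarrow> g \<in> Ar \<and> dm g = st \<and> cd g = st" for g
    unfolding groupG_def by auto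
  have nb0: "\<forall>u\<in>?P. \<forall>v\<in>?P. nbP u v \<longrightarrow> nbM (cd u) (cd v)"
    using S unfolding bundle_setting_def by (elim conjE) assumption
  have nb: "u \<in> ?P \<Longrightarrow> v \<in> ?P \<Longrightarrow> nbP u v \<Longrightarrow> nbM (cd u) (cd v)" for u v
    using nb0 by blast
  have ug: "u \<in> ?P \<Longrightarrow> g \<in> ?G \<Longrightarrow> cmp u g \<in> ?P \<and> cd (cmp u g) = cd u" for u g
  proof -
    assume "u \<in> ?P" "g \<in> ?G"
    hence a: "u \<in> Ar" "dm u = st" "cd u \<in> M" "g \<in> Ar" "dm g = st" "cd g = st"
      using Pm Gm by blast+
    have "cmp u g \<in> Ar" "dm (cmp u g) = st" "cd (cmp u g) = cd u" using a by simp_all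
    thus ?thesis using a(3) unfolding bundleP_def by simp
  qed
  have K: "?d x y z = cmp (iv x) (cmp (?R (cd x) (cd y) (cd z)) x)
     \<and> ?R (cd x) (cd y) (cd z) \<in> Ar \<and> dm (?R (cd x) (cd y) (cd z)) = cd x
     \<and> cd (?R (cd x) (cd y) (cd z)) = cd x"
    if "x \<in> ?P" "y \<in> ?P" "z \<in> ?P" "inf_simplex nbP [x, y, z]" for x y z
  proof -
    have n: "nbM (cd x) (cd y)" "nbM (cd y) (cd z)" "nbM (cd z) (cd x)"
      using that nb unfolding inf_simplex_def by auto
    show ?thesis using key[OF S C that(1-3) n] Rtyp[OF S C _ _ _ n] that Pm by blast
  qed
  have p1: "hat_form cd cmp iv ?R x y z = ?d x y z
            \<and> cmp (?R (cd x) (cd y) (cd z)) x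
                = cmp x (cmp (conn_form cd cmp iv nabla x y)
                          (cmp (conn_form cd cmp iv nabla y z) (conn_form cd cmp iv nabla z x)))"
    if "x \<in> ?P" "y \<in> ?P" "z \<in> ?P" "inf_simplex nbP [x, y, z]" for x y z
  proof -
    have K1: "?d x y z = cmp (iv x) (cmp (?R (cd x) (cd y) (cd z)) x)"
     and R: "?R (cd x) (cd y) (cd z) \<in> Ar" "dm (?R (cd x) (cd y) (cd z)) = cd x"
      "cd (?R (cd x) (cd y) (cd z)) = cd x"
      using K[OF that] by auto
    have "cmp x (?d x y z) = cmp (?R (cd x) (cd y) (cd z)) x"
      unfolding K1 using R Pm[OF that(1)] by simp
    moreover have "hat_form cd cmp iv ?R x y z = cmp (iv x) (cmp (?R (cd x) (cd y) (cd z)) x)"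
      unfolding hat_form_def ..
    ultimately show ?thesis using K1 unfolding d_form_def by simp
  qed
  have p2: "horizontal2 ?P ?G cmp nbP ?d"
    unfolding horizontal2_def
  proof (intro ballI impI)
    fix u0 u1 u2 g1 g2 assume a: "u0 \<in> ?P" "u1 \<in> ?P" "u2 \<in> ?P" "g1 \<in> ?G" "g2 \<in> ?G"
      "inf_simplex nbP [u0, u1, u2] \<and> inf_simplex nbP [u0, cmp u1 g1, cmp u2 g2]"
    have "?d u0 u1 u2 = cmp (iv u0) (cmp (?R (cd u0) (cd u1) (cd u2)) u0)"
      using K[of u0 u1 u2] a by blast
    moreover have "?d u0 (cmp u1 g1) (cmp u2 g2) = cmp (iv u0) (cmp (?R (cd u0) (cd u1) (cd u2)) u0)"
      using K[of u0 "cmp u1 g1" "cmp u2 g2"] a ug[of u1 g1] ug[of u2 g2] by auto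
    ultimately show "?d u0 u1 u2 = ?d u0 (cmp u1 g1) (cmp u2 g2)" by simp
  qed
  have p3: "equivariant2 ?P ?G cmp iv nbP ?d"
    unfolding equivariant2_def
  proof (intro ballI impI)
    fix u0 u1 u2 g assume a: "u0 \<in> ?P" "u1 \<in> ?P" "u2 \<in> ?P" "g \<in> ?G"
      "inf_simplex nbP [u0, u1, u2]"
    have sg: "inf_simplex nbP [cmp u0 g, cmp u1 g, cmp u2 g]"
    proof -
      have r: "\<forall>g\<in>?G. \<forall>u\<in>?P. \<forall>v\<in>?P. nbP u v \<longrightarrow> nbP (cmp u g) (cmp v g)"
        using S unfolding bundle_setting_def by (elim conjE) assumption
      show ?thesis using a(5) r a(1-4) unfolding inf_simplex_def by simp
    qed
    have K0: "?d u0 u1 u2 = cmp (iv u0) (cmp (?R (cd u0) (cd u1) (cd u2)) u0)"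
     and R: "?R (cd u0) (cd u1) (cd u2) \<in> Ar" "dm (?R (cd u0) (cd u1) (cd u2)) = cd u0"
      "cd (?R (cd u0) (cd u1) (cd u2)) = cd u0"
      using K[of u0 u1 u2] a by auto
    have "?d (cmp u0 g) (cmp u1 g) (cmp u2 g)
       = cmp (iv (cmp u0 g)) (cmp (?R (cd u0) (cd u1) (cd u2)) (cmp u0 g))"
      using K[OF _ _ _ sg] a ug[of u0 g] ug[of u1 g] ug[of u2 g] by auto
    also have "\<dots> = cmp (iv g) (cmp (?d u0 u1 u2) g)"
      unfolding K0 using R Pm[OF a(1)] Gm[OF a(4)] by (simp add: iv_cmp)
    finally show "?d (cmp u0 g) (cmp u1 g) (cmp u2 g) = cmp (iv g) (cmp (?d u0 u1 u2) g)" .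
  qed
  show ?thesis using p1 p2 p3 by blast
qed

end
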